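(* Assume $V=L$. Let $\xi_0,\xi_1,\xi_2,\dots\in\Xi$, let $\vartheta=\bigcup_n\xi_n$, and let $X_n\in\mathrm{IPS}_{\xi_n}$ ($n<\omega$) satisfy the coherence condition $X_n\restriction(\xi_k\cap\xi_n)=X_k\restriction(\xi_k\cap\xi_n)$ for all $k,n$. Then $X=\bigcap_n(X_n\uparrow\vartheta)$ belongs to $\mathrm{IPS}_\vartheta$ and $X\restriction\xi_n=X_n$ for all $n$. In particular, if the sets $\xi_0,\xi_1,\dots$ are pairwise disjoint, then the coherence condition holds automatically, so $X=\bigcap_n(X_n\uparrow\vartheta)\in\mathrm{IPS}_\vartheta$ and $X\restriction\xi_n=X_n$ for all $n$.
   Context: $T$ is the set of all nonempty finite sequences of countable ordinals, ordered by strict extension $\subset$. $\Xi$ is the set of all at most countable $\xi\subseteq T$ closed downward under $\subset$. $D=2^\omega$; $D^\xi$ is the product of $\xi$ copies of $D$ (with $D^\varnothing=\{\varnothing\}$). For $\eta\subseteq\xi$ in $\Xi$: $x\restriction\eta$ is restriction of $x\in D^\xi$, $X\restriction\eta=\{x\restriction\eta:x\in X\}$, and $Y\uparrow\xi=\{x\in D^\xi:x\restriction\eta\in Y\}$ for $Y\subseteq D^\eta$. For $\zeta\in\Xi$, $\mathrm{IPS}_\zeta$ is the set of all $X\subseteq D^\zeta$ for which there is a homeomorphism $H$ of $D^\zeta$ onto $X$ such that for all $x_0,x_1\in D^\zeta$ and all $\xi\in\Xi$, $\xi\subseteq\zeta$: $x_0\restriction\xi=x_1\restriction\xi\iff H(x_0)\restriction\xi=H(x_1)\restriction\xi$.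 *)

theory Defs
  imports "HOL-Analysis.Analysis"
begin

text \<open>Nodes of the tree T: nonempty finite sequences (lists) of labels of type 'a
  (in the paper: countable ordinals). Strict extension = proper prefix.\<close>

definition T :: "'a list set" where
  "T = {s. s \<noteq> []}"

definition Xi :: "'a list set set" where
  "Xi = {\<xi>. \<xi> \<subseteq> T \<and> countable \<xi> \<and>
              (\<forall>s t. t \<in> \<xi> \<longrightarrow> s \<in> T \<longrightarrow> (\<exists>u. u \<noteq> [] \<and> t = s @ u) \<longrightarrow> s \<in> \<xi>)}"

definition Dtop :: "(nat \<Rightarrow> bool) topology" where
  "Dtop = product_topology (\<lambda>_. discrete_topology (UNIV :: bool set)) UNIV"

definition cube :: "'a list set \<Rightarrow> ('a list \<Rightarrow> nat \<Rightarrow> bool) topology" where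
  "cube \<xi> = product_topology (\<lambda>_. Dtop) \<xi>"

definition restr_set :: "('a list \<Rightarrow> nat \<Rightarrow> bool) set \<Rightarrow> 'a list set
    \<Rightarrow> ('a list \<Rightarrow> nat \<Rightarrow> bool) set" where
  "restr_set X \<eta> = (\<lambda>x. restrict x \<eta>) ` X"

definition lift_set :: "('a list \<Rightarrow> nat \<Rightarrow> bool) set \<Rightarrow> 'a list set \<Rightarrow> 'a list set
    \<Rightarrow> ('a list \<Rightarrow> nat \<Rightarrow> bool) set" where
  "lift_set Y \<eta> \<xi> = {x \<in> topspace (cube \<xi>). restrict x \<eta> \<in> Y}"

definition IPS :: "'a list set \<Rightarrow> ('a list \<Rightarrow> nat \<Rightarrow> bool) set set" where
  "IPS \<zeta> = {X. X \<subseteq> topspace (cube \<zeta>) \<and>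
     (\<exists>H. homeomorphic_map (cube \<zeta>) (subtopology (cube \<zeta>) X) H \<and>
        (\<forall>x0\<in>topspace (cube \<zeta>). \<forall>x1\<in>topspace (cube \<zeta>). \<forall>\<xi>\<in>Xi. \<xi> \<subseteq> \<zeta> \<longrightarrow>
           (restrict x0 \<xi> = restrict x1 \<xi> \<longleftrightarrow> restrict (H x0) \<xi> = restrict (H x1) \<xi>)))}"

end

theory Submission
  imports Defs
begin


definition dc :: "'a list \<Rightarrow> 'a list set" where
  "dc s = {t. t \<noteq> [] \<and> (\<exists>u. s = t @ u)}"
definition anc :: "'a list \<Rightarrow> 'a list set" where
  "anc s = {t. t \<noteq> [] \<and> (\<exists>u. u \<noteq> [] \<and> s = t @ u)}"

lemma topspace_Dtop[simp]: "topspace Dtop = UNIV"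
  by (simp add: Dtop_def)

lemma topspace_cube: "topspace (cube \<xi>) = PiE \<xi> (\<lambda>_. UNIV)"
  by (simp add: cube_def)

lemma compact_Dtop: "compact_space Dtop"
  unfolding Dtop_def by (simp add: compact_space_product_topology compact_space_discrete_topology)

lemma compact_cube: "compact_space (cube \<xi>)"
  unfolding cube_def by (simp add: compact_space_product_topology compact_Dtop)

lemma Hausdorff_cube: "Hausdorff_space (cube \<xi>)"
  unfolding cube_def Dtop_def by (simp add: Hausdorff_space_product_topology)

lemma cube_nonempty: "topspace (cube \<xi>) \<noteq> {}"
  by (simp add: topspace_cube PiE_eq_empty_iff)

lemma dc_finite: "finite (dc s)"
proof -
  have "dc s \<subseteq> (\<lambda>i. take i s) ` {..length s}"
  proof
    fix t assume "t \<in> dc s"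
    then obtain u where "s = t @ u" unfolding dc_def by blast
    then have "t = take (length t) s" "length t \<le> length s" by simp_all
    then show "t \<in> (\<lambda>i. take i s) ` {..length s}" by blast
  qed
  then show ?thesis by (rule finite_subset) auto
qed

lemma anc_sub_dc: "anc s \<subseteq> dc s" by (auto simp: anc_def dc_def)
lemma anc_finite: "finite (anc s)" using dc_finite anc_sub_dc finite_subset by blast
lemma dc_eq: "s \<noteq> [] \<Longrightarrow> dc s = insert s (anc s)"
  by (auto simp: anc_def dc_def)
lemma s_notin_anc: "s \<notin> anc s" by (auto simp: anc_def)
lemma anc_length: "t \<in> anc s \<Longrightarrow> length t < length s" by (auto simp: anc_def)
lemma dc_length: "t \<in> dc s \<Longrightarrow> length t \<le> length s" by (auto simp: dc_def)

lemma dc_Xi: "dc s \<in> Xi"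
proof -
  have "countable (dc s)" using dc_finite countable_finite by blast
  moreover have "dc s \<subseteq> T" unfolding dc_def T_def by blast
  moreover have "r \<in> dc s" if "t \<in> dc s" "r \<in> T" "t = r @ u" for t r u
  proof -
    from that(1) obtain v where "s = t @ v" unfolding dc_def by blast
    then have "s = r @ (u @ v)" using that(3) by simp
    then show ?thesis using that(2) unfolding dc_def T_def by blast
  qed
  ultimately show ?thesis unfolding Xi_def by blast
qed

lemma anc_Xi: "anc s \<in> Xi"
proof -
  have "countable (anc s)" using anc_finite countable_finite by blast
  moreover have "anc s \<subseteq> T" unfolding anc_def T_def by blast
  moreover have "r \<in> anc s" if "t \<in> anc s" "r \<in> T" "t = r @ u" "u \<noteq> []" for t r u
  proof -
    from that(1) obtain v where "s = t @ v" "v \<noteq> []" unfolding anc_def by blast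
    then have "s = r @ (u @ v)" "u @ v \<noteq> []" using that(3) by simp_all
    then show ?thesis using that(2) unfolding anc_def T_def by blast
  qed
  ultimately show ?thesis unfolding Xi_def by blast
qed

lemma Xi_dc: assumes "\<xi> \<in> Xi" "s \<in> \<xi>" shows "dc s \<subseteq> \<xi>"
proof
  fix t assume "t \<in> dc s"
  then obtain u where u: "t \<noteq> []" "s = t @ u" unfolding dc_def by blast
  show "t \<in> \<xi>"
  proof (cases "u = []")
    case True then show ?thesis using u assms(2) by simp
  next
    case False
    then show ?thesis using assms u unfolding Xi_def T_def by blast
  qed
qed

lemma Xi_anc: "\<xi> \<in> Xi \<Longrightarrow> s \<in> \<xi> \<Longrightarrow> anc s \<subseteq> \<xi>"
  using Xi_dc anc_sub_dc by blast

lemma Xi_nonnil: "\<xi> \<in> Xi \<Longrightarrow> s \<in> \<xi> \<Longrightarrow> s \<noteq> []"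
  unfolding Xi_def T_def by blast

lemma dc_trans: assumes "t \<in> dc s" shows "dc t \<subseteq> dc s"
proof
  fix r assume "r \<in> dc t"
  then obtain u v where "r \<noteq> []" "t = r @ u" "s = t @ v" using assms unfolding dc_def by blast
  then show "r \<in> dc s" unfolding dc_def by (metis (mono_tags, lifting) append.assoc mem_Collect_eq)
qed

lemma anc_dc_in: assumes "t \<in> anc s" shows "dc t \<subseteq> anc s"
proof
  fix r assume "r \<in> dc t"
  then obtain u v where "r \<noteq> []" "t = r @ u" "s = t @ v" "v \<noteq> []" using assms unfolding dc_def anc_def by blast
  then have "s = r @ (u @ v)" "u @ v \<noteq> []" by simp_all
  then show "r \<in> anc s" using \<open>r \<noteq> []\<close> unfolding anc_def by blast
qed

lemma s_in_dc: "s \<noteq> [] \<Longrightarrow> s \<in> dc s" unfolding dc_def by blast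

lemma anc_butlast: assumes h: "butlast s \<noteq> []" shows "anc s = dc (butlast s)"
proof -
  have sne: "s \<noteq> []" using h by auto
  have s: "s = butlast s @ [last s]" using sne by simp
  show ?thesis
  proof
    show "anc s \<subseteq> dc (butlast s)"
    proof
      fix t assume "t \<in> anc s"
      then obtain u where u: "t \<noteq> []" "u \<noteq> []" "s = t @ u" unfolding anc_def by blast
      then have "butlast s = t @ butlast u" by (simp add: butlast_append)
      then show "t \<in> dc (butlast s)" using u(1) unfolding dc_def by blast
    qed
    show "dc (butlast s) \<subseteq> anc s"
    proof
      fix t assume "t \<in> dc (butlast s)"
      then obtain v where v: "t \<noteq> []" "butlast s = t @ v" unfolding dc_def by blast
      then have "s = t @ (v @ [last s])" using s by (metis append.assoc)
      then show "t \<in> anc s" using v(1) unfolding anc_def by blast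
    qed
  qed
qed

lemma anc_empty: assumes "s \<noteq> []" "butlast s = []" shows "anc s = {}"
proof -
  have "length s = 1" using assms by (cases s) (auto split: if_splits)
  have "False" if "t \<noteq> []" "u \<noteq> []" "s = t @ u" for t u
  proof -
    have "length t \<ge> 1" "length u \<ge> 1" using that by (auto simp: Suc_le_eq)
    then show False using \<open>length s = 1\<close> that(3) by simp
  qed
  then show ?thesis unfolding anc_def by blast
qed

lemma butlast_in_anc: assumes "butlast s \<noteq> []" shows "butlast s \<in> anc s"
proof -
  have "s = butlast s @ [last s]" using assms by (metis append_butlast_last_id butlast.simps(1))
  then show ?thesis using assms unfolding anc_def by blast
qed



definition ipsH :: "'a list set \<Rightarrow> ('a list \<Rightarrow> nat \<Rightarrow> bool) set \<Rightarrow> (('a list \<Rightarrow> nat \<Rightarrow> bool) \<Rightarrow> ('a list \<Rightarrow> nat \<Rightarrow> bool)) \<Rightarrow> bool" where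
  "ipsH \<zeta> X H \<longleftrightarrow> homeomorphic_map (cube \<zeta>) (subtopology (cube \<zeta>) X) H \<and>
        (\<forall>x0\<in>topspace (cube \<zeta>). \<forall>x1\<in>topspace (cube \<zeta>). \<forall>\<xi>\<in>Xi. \<xi> \<subseteq> \<zeta> \<longrightarrow>
           (restrict x0 \<xi> = restrict x1 \<xi> \<longleftrightarrow> restrict (H x0) \<xi> = restrict (H x1) \<xi>))"

lemma IPS_iff: "X \<in> IPS \<zeta> \<longleftrightarrow> X \<subseteq> topspace (cube \<zeta>) \<and> (\<exists>H. ipsH \<zeta> X H)"
  unfolding IPS_def ipsH_def by blast

lemma restrict_restrict_sub: "C \<subseteq> B \<Longrightarrow> restrict (restrict x B) C = restrict x C"
  by (rule ext) (auto simp: restrict_def)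

lemma restr_restr: "C \<subseteq> B \<Longrightarrow> restr_set (restr_set X B) C = restr_set X C"
  unfolding restr_set_def image_image by (simp add: restrict_restrict_sub Int_absorb1 Int_absorb2)

lemma restrict_in_cube: "x \<in> topspace (cube \<zeta>) \<Longrightarrow> A \<subseteq> \<zeta> \<Longrightarrow> restrict x A \<in> topspace (cube A)"
  by (auto simp: topspace_cube)

lemma cube_ext_eq: "x \<in> topspace (cube \<zeta>) \<Longrightarrow> y \<in> topspace (cube \<zeta>) \<Longrightarrow> (\<And>s. s \<in> \<zeta> \<Longrightarrow> x s = y s) \<Longrightarrow> x = y"
  by (rule ext) (metis PiE_arb topspace_cube)

lemma restrict_eqI: "(\<And>s. s \<in> A \<Longrightarrow> x s = y s) \<Longrightarrow> restrict x A = restrict y A"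
  by (auto simp: restrict_def)

lemma restrict_eqD: "restrict x A = restrict y A \<Longrightarrow> s \<in> A \<Longrightarrow> x s = y s"
  by (metis restrict_apply')

lemma continuous_restrict: "A \<subseteq> \<zeta> \<Longrightarrow> continuous_map (cube \<zeta>) (cube A) (\<lambda>x. restrict x A)"
  unfolding cube_def continuous_map_componentwise
proof (intro conjI ballI)
  show "(\<lambda>x. restrict x A) ` topspace (product_topology (\<lambda>_. Dtop) \<zeta>) \<subseteq> extensional A" by auto
  fix k assume "A \<subseteq> \<zeta>" "k \<in> A"
  then show "continuous_map (product_topology (\<lambda>_. Dtop) \<zeta>) Dtop (\<lambda>x. restrict x A k)"
    using continuous_map_product_projection[of k \<zeta> "\<lambda>_. Dtop"] by auto
qed

lemma cube_proj: "k \<in> A \<Longrightarrow> continuous_map (cube A) Dtop (\<lambda>x. x k)"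
  unfolding cube_def by (rule continuous_map_product_projection)

locale ipsL =
  fixes \<zeta> :: "'a list set" and X and H
  assumes zeta: "\<zeta> \<in> Xi" and Xsub: "X \<subseteq> topspace (cube \<zeta>)" and ips: "ipsH \<zeta> X H"
begin

lemma hom: "homeomorphic_map (cube \<zeta>) (subtopology (cube \<zeta>) X) H"
  using ips unfolding ipsH_def by blast

lemma iprop: "x0 \<in> topspace (cube \<zeta>) \<Longrightarrow> x1 \<in> topspace (cube \<zeta>) \<Longrightarrow> \<xi> \<in> Xi \<Longrightarrow> \<xi> \<subseteq> \<zeta> \<Longrightarrow>
   restrict x0 \<xi> = restrict x1 \<xi> \<longleftrightarrow> restrict (H x0) \<xi> = restrict (H x1) \<xi>"
  using ips unfolding ipsH_def by blast

lemma image: "H ` topspace (cube \<zeta>) = X"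
  using homeomorphic_imp_surjective_map[OF hom] Xsub by auto

lemma Hin: "x \<in> topspace (cube \<zeta>) \<Longrightarrow> H x \<in> X"
  using image by blast

lemma Hin_top: "x \<in> topspace (cube \<zeta>) \<Longrightarrow> H x \<in> topspace (cube \<zeta>)"
  using Hin Xsub by blast

lemma cont: "continuous_map (cube \<zeta>) (cube \<zeta>) H"
  using homeomorphic_imp_continuous_map[OF hom] continuous_map_into_fulltopology by blast

lemma Xne: "X \<noteq> {}"
  using image cube_nonempty by blast

lemma loc: assumes "s \<in> \<zeta>" "w \<in> topspace (cube \<zeta>)" "w' \<in> topspace (cube \<zeta>)"
  "restrict w (dc s) = restrict w' (dc s)" shows "H w s = H w' s"
proof -
  have "restrict (H w) (dc s) = restrict (H w') (dc s)"
    using iprop[OF assms(2,3) dc_Xi Xi_dc[OF zeta assms(1)]] assms(4) by blast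
  then show ?thesis using s_in_dc[OF Xi_nonnil[OF zeta assms(1)]] by (rule restrict_eqD)
qed

lemma charC: assumes z: "z \<in> topspace (cube \<zeta>)" and h: "\<forall>s\<in>\<zeta>. restrict z (dc s) \<in> restr_set X (dc s)"
  shows "z \<in> X"
proof -
  have "\<forall>s\<in>\<zeta>. \<exists>w. w \<in> topspace (cube \<zeta>) \<and> restrict (H w) (dc s) = restrict z (dc s)"
  proof
    fix s assume "s \<in> \<zeta>"
    then obtain x where "x \<in> X" "restrict z (dc s) = restrict x (dc s)" using h unfolding restr_set_def by blast
    then show "\<exists>w. w \<in> topspace (cube \<zeta>) \<and> restrict (H w) (dc s) = restrict z (dc s)"
      using image by auto
  qed
  then obtain ws where ws: "\<And>s. s\<in>\<zeta> \<Longrightarrow> ws s \<in> topspace (cube \<zeta>) \<and> restrict (H (ws s)) (dc s) = restrict z (dc s)"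
    by metis
  define w where "w = (\<lambda>t. if t \<in> \<zeta> then ws t t else undefined)"
  have wtop: "w \<in> topspace (cube \<zeta>)" by (simp add: topspace_cube w_def PiE_def extensional_def)
  have c1: "ws t t = ws s t" if "s \<in> \<zeta>" "t \<in> dc s" for s t
  proof -
    have t: "t \<in> \<zeta>" using Xi_dc[OF zeta that(1)] that(2) by blast
    have sub: "dc t \<subseteq> dc s" using dc_trans[OF that(2)] .
    have "restrict (H (ws t)) (dc t) = restrict z (dc t)" using ws[OF t] by blast
    also have "\<dots> = restrict (restrict z (dc s)) (dc t)" using sub by (simp add: Int_absorb1 Int_absorb2)
    also have "\<dots> = restrict (H (ws s)) (dc t)" using ws[OF that(1)] sub by (metis restrict_restrict_sub)
    finally have "restrict (ws t) (dc t) = restrict (ws s) (dc t)"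
      using iprop[of "ws t" "ws s" "dc t"] ws[OF t] ws[OF that(1)] dc_Xi Xi_dc[OF zeta t] by blast
    then show ?thesis using s_in_dc[OF Xi_nonnil[OF zeta t]] by (rule restrict_eqD)
  qed
  have "H w s = z s" if s: "s \<in> \<zeta>" for s
  proof -
    have "restrict w (dc s) = restrict (ws s) (dc s)"
    proof (rule restrict_eqI)
      fix t assume "t \<in> dc s"
      then show "w t = ws s t" using c1[OF s] Xi_dc[OF zeta s] by (auto simp: w_def)
    qed
    then have "H w s = H (ws s) s" using loc[OF s wtop] ws[OF s] by blast
    also have "\<dots> = z s" using ws[OF s] s_in_dc[OF Xi_nonnil[OF zeta s]] restrict_eqD by metis
    finally show ?thesis .
  qed
  then have "H w = z" using cube_ext_eq[OF Hin_top[OF wtop] z] by blast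
  then show ?thesis using Hin[OF wtop] by simp
qed


definition w0 :: "'a list \<Rightarrow> nat \<Rightarrow> bool" where
  "w0 = (\<lambda>t. if t \<in> \<zeta> then (\<lambda>_. False) else undefined)"

lemma w0_top: "w0 \<in> topspace (cube \<zeta>)"
  by (simp add: w0_def topspace_cube PiE_def extensional_def)

lemma inv_exists: assumes A: "A \<in> Xi" "A \<subseteq> \<zeta>"
  shows "\<exists>g. continuous_map (subtopology (cube A) (restr_set X A)) (cube A) g \<and>
             (\<forall>w\<in>topspace (cube \<zeta>). g (restrict (H w) A) = restrict w A)"
proof -
  define ext where "ext = (\<lambda>v t. if t \<in> A then v t else w0 t)"
  have ext_top: "ext v \<in> topspace (cube \<zeta>)" for v
    using w0_top A(2) by (auto simp: ext_def topspace_cube PiE_def extensional_def)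
  have ext_restr: "restrict (ext v) A = restrict v A" for v
    by (rule restrict_eqI) (simp add: ext_def)
  have ext_cont: "continuous_map (cube A) (cube \<zeta>) ext"
    unfolding cube_def continuous_map_componentwise
  proof (intro conjI ballI)
    show "ext ` topspace (product_topology (\<lambda>_. Dtop) A) \<subseteq> extensional \<zeta>"
      using ext_top by (auto simp: topspace_cube PiE_def cube_def)
    fix k assume "k \<in> \<zeta>"
    show "continuous_map (product_topology (\<lambda>_. Dtop) A) Dtop (\<lambda>x. ext x k)"
    proof (cases "k \<in> A")
      case True
      then show ?thesis unfolding ext_def using continuous_map_product_projection[of k A "\<lambda>_. Dtop"] by simp
    next
      case False
      then show ?thesis unfolding ext_def using w0_top by (simp add: topspace_cube)
    qed
  qed
  define R where "R = (\<lambda>v. restrict (H (ext v)) A)"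
  have R_cont: "continuous_map (cube A) (cube A) R"
    unfolding R_def
    using continuous_map_compose[OF continuous_map_compose[OF ext_cont cont] continuous_restrict[OF A(2)]]
    by (simp add: o_def)
  have R_img: "R ` topspace (cube A) = restr_set X A"
  proof
    show "R ` topspace (cube A) \<subseteq> restr_set X A"
      unfolding R_def restr_set_def using Hin[OF ext_top] by blast
    show "restr_set X A \<subseteq> R ` topspace (cube A)"
    proof
      fix y assume "y \<in> restr_set X A"
      then obtain w where w: "w \<in> topspace (cube \<zeta>)" "y = restrict (H w) A"
        unfolding restr_set_def using image by auto
      have "restrict (ext (restrict w A)) A = restrict w A" by (simp add: ext_restr)
      then have "restrict (H (ext (restrict w A))) A = restrict (H w) A"
        using iprop[OF ext_top w(1) A(1) A(2)] by blast
      moreover have "restrict w A \<in> topspace (cube A)" using restrict_in_cube[OF w(1) A(2)] .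
      ultimately show "y \<in> R ` topspace (cube A)" unfolding R_def using w(2) by (metis image_eqI)
    qed
  qed
  have R_inj: "inj_on R (topspace (cube A))"
  proof
    fix v v' assume v: "v \<in> topspace (cube A)" "v' \<in> topspace (cube A)" "R v = R v'"
    then have "restrict (ext v) A = restrict (ext v') A"
      using iprop[OF ext_top ext_top A(1) A(2)] unfolding R_def by blast
    then have "restrict v A = restrict v' A" by (simp add: ext_restr)
    then show "v = v'" using v(1,2) by (metis PiE_restrict topspace_cube)
  qed
  have "homeomorphic_map (cube A) (subtopology (cube A) (restr_set X A)) R"
  proof (rule continuous_imp_homeomorphic_map)
    show "continuous_map (cube A) (subtopology (cube A) (restr_set X A)) R"
      using R_cont R_img by (auto simp: continuous_map_in_subtopology)
    show "compact_space (cube A)" by (rule compact_cube)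
    show "Hausdorff_space (subtopology (cube A) (restr_set X A))"
      using Hausdorff_cube Hausdorff_space_subtopology by blast
    show "R ` topspace (cube A) = topspace (subtopology (cube A) (restr_set X A))"
    proof -
      have "R ` topspace (cube A) \<subseteq> topspace (cube A)"
        using R_cont continuous_map_image_subset_topspace by blast
      then show ?thesis using R_img by (simp add: Int_absorb1)
    qed
    show "inj_on R (topspace (cube A))" by (rule R_inj)
  qed
  then obtain g where g: "homeomorphic_maps (cube A) (subtopology (cube A) (restr_set X A)) R g"
    using homeomorphic_map_maps by blast
  show ?thesis
  proof (intro exI conjI ballI)
    show "continuous_map (subtopology (cube A) (restr_set X A)) (cube A) g"
      using g by (simp add: homeomorphic_maps_def)
    fix w assume w: "w \<in> topspace (cube \<zeta>)"
    have rw: "restrict w A \<in> topspace (cube A)" using restrict_in_cube[OF w A(2)] .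
    have "restrict (ext (restrict w A)) A = restrict w A" by (simp add: ext_restr)
    then have "R (restrict w A) = restrict (H w) A"
      unfolding R_def using iprop[OF ext_top w A(1) A(2)] by blast
    then show "g (restrict (H w) A) = restrict w A"
      using g rw by (metis homeomorphic_maps_def)
  qed
qed


definition ginv where
  "ginv s = (SOME g. continuous_map (subtopology (cube (anc s)) (restr_set X (anc s))) (cube (anc s)) g \<and>
             (\<forall>w\<in>topspace (cube \<zeta>). g (restrict (H w) (anc s)) = restrict w (anc s)))"

lemma ginv: assumes "s \<in> \<zeta>"
  shows "continuous_map (subtopology (cube (anc s)) (restr_set X (anc s))) (cube (anc s)) (ginv s)"
    "\<And>w. w \<in> topspace (cube \<zeta>) \<Longrightarrow> ginv s (restrict (H w) (anc s)) = restrict w (anc s)"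
  using someI_ex[OF inv_exists[OF anc_Xi Xi_anc[OF zeta assms]]] unfolding ginv_def by blast+

definition ext2 where
  "ext2 s v d = (\<lambda>t. if t \<in> anc s then v t else if t = s then d else w0 t)"

definition fib where
  "fib s y d = H (ext2 s (ginv s (restrict y (anc s))) d) s"

lemma ext2_top: "s \<in> \<zeta> \<Longrightarrow> ext2 s v d \<in> topspace (cube \<zeta>)"
  using w0_top Xi_anc[OF zeta, of s]
  by (auto simp: ext2_def topspace_cube PiE_def extensional_def)

lemma fib_cong: "restrict y (anc s) = restrict y' (anc s) \<Longrightarrow> fib s y d = fib s y' d"
  unfolding fib_def by simp

lemma F1: assumes s: "s \<in> \<zeta>" and w: "w \<in> topspace (cube \<zeta>)"
  and y: "restrict y (anc s) = restrict (H w) (anc s)"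
  shows "\<exists>w'\<in>topspace (cube \<zeta>). restrict w' (anc s) = restrict w (anc s) \<and> w' s = d \<and>
            fib s y d = H w' s \<and> restrict (H w') (anc s) = restrict y (anc s)"
proof -
  define w' where "w' = ext2 s (restrict w (anc s)) d"
  have w'top: "w' \<in> topspace (cube \<zeta>)" unfolding w'_def using ext2_top[OF s] .
  have r: "restrict w' (anc s) = restrict w (anc s)"
    by (rule restrict_eqI) (simp add: w'_def ext2_def)
  have "w' s = d" using s_notin_anc[of s] by (simp add: w'_def ext2_def)
  moreover have "fib s y d = H w' s" unfolding fib_def y ginv(2)[OF s w] w'_def ..
  moreover have "restrict (H w') (anc s) = restrict y (anc s)"
    using iprop[OF w'top w anc_Xi Xi_anc[OF zeta s]] r y by simp
  ultimately show ?thesis using w'top r by blast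
qed

lemma restr_setE: assumes "u \<in> restr_set X A" obtains w where "w \<in> topspace (cube \<zeta>)" "u = restrict (H w) A"
  using assms image unfolding restr_set_def by auto

lemma F2: assumes s: "s \<in> \<zeta>" and y: "restrict y (anc s) \<in> restr_set X (anc s)"
  and eq: "fib s y d = fib s y d'" shows "d = d'"
proof -
  obtain w where w: "w \<in> topspace (cube \<zeta>)" "restrict y (anc s) = restrict (H w) (anc s)"
    using y by (rule restr_setE)
  obtain w1 where w1: "w1\<in>topspace (cube \<zeta>)" "w1 s = d" "fib s y d = H w1 s" "restrict (H w1) (anc s) = restrict y (anc s)"
    using F1[OF s w] by blast
  obtain w2 where w2: "w2\<in>topspace (cube \<zeta>)" "w2 s = d'" "fib s y d' = H w2 s" "restrict (H w2) (anc s) = restrict y (anc s)"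
    using F1[OF s w] by blast
  have sn: "s \<noteq> []" using Xi_nonnil[OF zeta s] .
  have "restrict (H w1) (dc s) = restrict (H w2) (dc s)"
  proof (rule restrict_eqI)
    fix t assume "t \<in> dc s"
    then have "t = s \<or> t \<in> anc s" using dc_eq[OF sn] by blast
    then show "H w1 t = H w2 t"
      using w1(3,4) w2(3,4) eq by (metis restrict_eqD)
  qed
  then have "restrict w1 (dc s) = restrict w2 (dc s)"
    using iprop[OF w1(1) w2(1) dc_Xi Xi_dc[OF zeta s]] by blast
  then show ?thesis using w1(2) w2(2) s_in_dc[OF sn] by (metis restrict_eqD)
qed

lemma F3: assumes s: "s \<in> \<zeta>" and w: "w \<in> topspace (cube \<zeta>)"
  and z: "restrict z (dc s) = restrict (H w) (dc s)" shows "fib s z (w s) = z s"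
proof -
  have sn: "s \<noteq> []" using Xi_nonnil[OF zeta s] .
  have "restrict z (anc s) = restrict (H w) (anc s)"
    using z anc_sub_dc by (metis restrict_restrict_sub)
  then obtain w' where w': "w'\<in>topspace (cube \<zeta>)" "restrict w' (anc s) = restrict w (anc s)" "w' s = w s"
     "fib s z (w s) = H w' s"
    using F1[OF s w] by blast
  have "restrict w' (dc s) = restrict w (dc s)"
  proof (rule restrict_eqI)
    fix t assume "t \<in> dc s"
    then have "t = s \<or> t \<in> anc s" using dc_eq[OF sn] by blast
    then show "w' t = w t" using w'(2,3) by (metis restrict_eqD)
  qed
  then have "H w' s = H w s" using loc[OF s w'(1) w] by blast
  also have "\<dots> = z s" using z s_in_dc[OF sn] by (metis restrict_eqD)
  finally show ?thesis using w'(4) by simp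
qed

lemma F4: assumes s: "s \<in> \<zeta>"
  and p: "continuous_map TT (subtopology (cube (anc s)) (restr_set X (anc s))) p"
  and q: "continuous_map TT Dtop q"
  shows "continuous_map TT Dtop (\<lambda>x. H (ext2 s (ginv s (p x)) (q x)) s)"
proof -
  have gp: "continuous_map TT (cube (anc s)) (\<lambda>x. ginv s (p x))"
    using continuous_map_compose[OF p ginv(1)[OF s]] by (simp add: o_def)
  have e: "continuous_map TT (cube \<zeta>) (\<lambda>x. ext2 s (ginv s (p x)) (q x))"
    unfolding cube_def continuous_map_componentwise
  proof (intro conjI ballI)
    show "(\<lambda>x. ext2 s (ginv s (p x)) (q x)) ` topspace TT \<subseteq> extensional \<zeta>"
      using ext2_top[OF s] by (auto simp: topspace_cube PiE_def)
    fix k assume k: "k \<in> \<zeta>"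
    show "continuous_map TT Dtop (\<lambda>x. ext2 s (ginv s (p x)) (q x) k)"
    proof (cases "k \<in> anc s")
      case True
      have "continuous_map TT Dtop (\<lambda>x. ginv s (p x) k)"
        using continuous_map_compose[OF gp cube_proj[OF True]]
        by (simp add: o_def)
      then show ?thesis using True by (simp add: ext2_def)
    next
      case False
      show ?thesis
      proof (cases "k = s")
        case True then show ?thesis using False q by (simp add: ext2_def)
      next
        case False2: False
        then show ?thesis using False w0_top by (simp add: ext2_def topspace_cube)
      qed
    qed
  qed
  have "continuous_map TT (cube \<zeta>) (\<lambda>x. H (ext2 s (ginv s (p x)) (q x)))"
    using continuous_map_compose[OF e cont] by (simp add: o_def)
  then show ?thesis
    using continuous_map_compose[OF _ cube_proj[OF s]]
    by (simp add: o_def)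
qed

end



primrec hk :: "('a list \<Rightarrow> ('a list \<Rightarrow> 'b) \<Rightarrow> 'c \<Rightarrow> 'b) \<Rightarrow> 'a list set \<Rightarrow> nat \<Rightarrow> ('a list \<Rightarrow> 'c) \<Rightarrow> 'a list \<Rightarrow> 'b" where
  "hk F V 0 x = (\<lambda>_. undefined)"
| "hk F V (Suc k) x = (\<lambda>s. if s \<in> V \<and> length s = Suc k then F s (hk F V k x) (x s) else hk F V k x s)"

definition HHg where "HHg F V x = (\<lambda>s. hk F V (length s) x s)"

lemma hk_undef: "length s > k \<Longrightarrow> hk F V k x s = undefined"
  by (induction k) simp_all

lemma hk_mono: "length s \<le> k \<Longrightarrow> hk F V k x s = hk F V (length s) x s"
proof (induction k)
  case 0 then show ?case by simp
next
  case (Suc k)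
  show ?case
  proof (cases "length s = Suc k")
    case True then show ?thesis by simp
  next
    case False
    then have "length s \<le> k" using Suc.prems by simp
    then show ?thesis using Suc.IH False by simp
  qed
qed

lemma HHg_eq:
  assumes cong: "\<And>s y y' d. restrict y (anc s) = restrict y' (anc s) \<Longrightarrow> F s y d = F s y' d"
    and nil: "[] \<notin> V"
  shows "HHg F V x s = (if s \<in> V then F s (HHg F V x) (x s) else undefined)"
proof (cases s rule: rev_cases)
  case Nil
  then show ?thesis using nil by (simp add: HHg_def)
next
  case (snoc p a)
  define m where "m = length p"
  have ls: "length s = Suc m" using snoc m_def by simp
  have r: "restrict (hk F V m x) (anc s) = restrict (HHg F V x) (anc s)"
  proof (rule restrict_eqI)
    fix t assume "t \<in> anc s"
    then have "length t \<le> m" using anc_length ls by fastforce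
    then show "hk F V m x t = HHg F V x t" unfolding HHg_def by (rule hk_mono)
  qed
  have "HHg F V x s = (if s \<in> V then F s (hk F V m x) (x s) else hk F V m x s)"
    by (simp add: HHg_def ls)
  also have "\<dots> = (if s \<in> V then F s (HHg F V x) (x s) else undefined)"
    using cong[OF r] hk_undef[where k=m and s=s and F=F and V=V and x=x] ls by simp
  finally show ?thesis .
qed

locale mainL =
  fixes \<xi>s :: "nat \<Rightarrow> 'a list set" and Xs and Hs
  assumes xi: "\<And>n. \<xi>s n \<in> Xi" and sub: "\<And>n. Xs n \<subseteq> topspace (cube (\<xi>s n))"
    and ipsh: "\<And>n. ipsH (\<xi>s n) (Xs n) (Hs n)"
    and coh: "\<And>k n. restr_set (Xs n) (\<xi>s k \<inter> \<xi>s n) = restr_set (Xs k) (\<xi>s k \<inter> \<xi>s n)"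
begin

lemma L: "ipsL (\<xi>s n) (Xs n) (Hs n)"
  using xi sub ipsh by (simp add: ipsL_def)

definition V where "V = (\<Union>m. \<xi>s m)"
definition N where "N s = (LEAST n. s \<in> \<xi>s n)"
definition Phi where "Phi s y d = ipsL.fib (\<xi>s (N s)) (Xs (N s)) (Hs (N s)) s y d"
definition HH where "HH = HHg Phi V"

lemma N: "s \<in> V \<Longrightarrow> s \<in> \<xi>s (N s)"
proof -
  assume "s \<in> V"
  then obtain n where "s \<in> \<xi>s n" unfolding V_def by blast
  then show ?thesis unfolding N_def by (rule LeastI)
qed

lemma coh': "C \<subseteq> \<xi>s m \<Longrightarrow> C \<subseteq> \<xi>s n \<Longrightarrow> restr_set (Xs m) C = restr_set (Xs n) C"
proof -
  assume "C \<subseteq> \<xi>s m" "C \<subseteq> \<xi>s n"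
  then have "C \<subseteq> \<xi>s n \<inter> \<xi>s m" by blast
  then have "restr_set (Xs m) C = restr_set (restr_set (Xs m) (\<xi>s n \<inter> \<xi>s m)) C"
    by (simp add: restr_restr)
  also have "\<dots> = restr_set (restr_set (Xs n) (\<xi>s n \<inter> \<xi>s m)) C" unfolding coh[where k=n and n=m] ..
  also have "\<dots> = restr_set (Xs n) C" using \<open>C \<subseteq> \<xi>s n \<inter> \<xi>s m\<close> by (simp add: restr_restr)
  finally show ?thesis .
qed

lemma nilV: "[] \<notin> V"
  unfolding V_def using Xi_nonnil[OF xi] by blast

lemma ancV: "s \<in> V \<Longrightarrow> anc s \<subseteq> V"
  using Xi_anc[OF xi N] unfolding V_def by blast

lemma dcV: "s \<in> V \<Longrightarrow> dc s \<subseteq> V"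
  using Xi_dc[OF xi N] unfolding V_def by blast

lemma HH_eq: "HH x s = (if s \<in> V then Phi s (HH x) (x s) else undefined)"
  unfolding HH_def
  by (rule HHg_eq) (auto simp: Phi_def nilV intro: ipsL.fib_cong[OF L])

lemma HH_top: "HH x \<in> topspace (cube V)"
  using HH_eq[of x] by (auto simp: topspace_cube PiE_def extensional_def)

lemma good: "s \<in> V \<Longrightarrow> restrict (HH x) (anc s) \<in> restr_set (Xs (N s)) (anc s) \<and>
     restrict (HH x) (dc s) \<in> restr_set (Xs (N s)) (dc s)"
proof (induction "length s" arbitrary: s rule: less_induct)
  case less
  define n where "n = N s"
  have sn: "s \<in> \<xi>s n" using N[OF less.prems] n_def by simp
  have sne: "s \<noteq> []" using less.prems nilV by blast
  have a: "restrict (HH x) (anc s) \<in> restr_set (Xs n) (anc s)"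
  proof (cases "butlast s = []")
    case True
    then have "anc s = {}" using anc_empty[OF sne] by simp
    moreover obtain z where "z \<in> Xs n" using ipsL.Xne[OF L] by blast
    ultimately show ?thesis unfolding restr_set_def by (auto simp: restrict_def)
  next
    case False
    define p where "p = butlast s"
    have pa: "p \<in> anc s" using butlast_in_anc[OF False] p_def by simp
    have pV: "p \<in> V" using pa ancV[OF less.prems] by blast
    have lp: "length p < length s" using anc_length[OF pa] .
    have "restrict (HH x) (dc p) \<in> restr_set (Xs (N p)) (dc p)" using less.hyps[OF lp pV] by blast
    moreover have "restr_set (Xs (N p)) (dc p) = restr_set (Xs n) (dc p)"
      by (rule coh'[OF Xi_dc[OF xi N[OF pV]] subset_trans[OF anc_dc_in[OF pa] Xi_anc[OF xi sn]]])
    ultimately show ?thesis using anc_butlast[OF False] p_def by simp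
  qed
  interpret I: ipsL "\<xi>s n" "Xs n" "Hs n" by (rule L)
  obtain w where w: "w \<in> topspace (cube (\<xi>s n))" "restrict (HH x) (anc s) = restrict (Hs n w) (anc s)"
    using a by (rule I.restr_setE)
  obtain w' where w': "w' \<in> topspace (cube (\<xi>s n))" "I.fib s (HH x) (x s) = Hs n w' s"
     "restrict (Hs n w') (anc s) = restrict (HH x) (anc s)"
    using I.F1[OF sn w, of "x s"] by blast
  have "HH x s = I.fib s (HH x) (x s)" using HH_eq[of x s] less.prems by (simp add: Phi_def n_def)
  then have "restrict (HH x) (dc s) = restrict (Hs n w') (dc s)"
  proof (intro restrict_eqI)
    fix t assume hs: "HH x s = I.fib s (HH x) (x s)" and "t \<in> dc s"
    then have "t = s \<or> t \<in> anc s" using dc_eq[OF sne] by blast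
    then show "HH x t = Hs n w' t"
    proof
      assume "t = s" then show ?thesis using hs w'(2) by simp
    next
      assume "t \<in> anc s" then show ?thesis using w'(3) restrict_eqD by metis
    qed
  qed
  then have "restrict (HH x) (dc s) \<in> restr_set (Xs n) (dc s)"
    unfolding restr_set_def using I.Hin[OF w'(1)] by blast
  then show ?case using a n_def by simp
qed


definition Xset where "Xset = (\<Inter>n. lift_set (Xs n) (\<xi>s n) V)"

lemma Xset_iff: "z \<in> Xset \<longleftrightarrow> z \<in> topspace (cube V) \<and> (\<forall>n. restrict z (\<xi>s n) \<in> Xs n)"
  unfolding Xset_def lift_set_def by blast

lemma good': "s \<in> \<xi>s m \<Longrightarrow> restrict (HH x) (dc s) \<in> restr_set (Xs m) (dc s)"
proof -
  assume sm: "s \<in> \<xi>s m"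
  then have sV: "s \<in> V" unfolding V_def by blast
  have "restr_set (Xs (N s)) (dc s) = restr_set (Xs m) (dc s)"
    by (rule coh'[OF Xi_dc[OF xi N[OF sV]] Xi_dc[OF xi sm]])
  then show ?thesis using good[OF sV] by simp
qed

lemma HH_in: "HH x \<in> Xset"
  unfolding Xset_iff
proof (intro conjI allI HH_top)
  fix n
  interpret I: ipsL "\<xi>s n" "Xs n" "Hs n" by (rule L)
  show "restrict (HH x) (\<xi>s n) \<in> Xs n"
  proof (rule I.charC)
    show "restrict (HH x) (\<xi>s n) \<in> topspace (cube (\<xi>s n))" by (simp add: topspace_cube)
    show "\<forall>s\<in>\<xi>s n. restrict (restrict (HH x) (\<xi>s n)) (dc s) \<in> restr_set (Xs n) (dc s)"
    proof
      fix s assume s: "s \<in> \<xi>s n"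
      have "restrict (restrict (HH x) (\<xi>s n)) (dc s) = restrict (HH x) (dc s)"
        using Xi_dc[OF xi s] by (rule restrict_restrict_sub)
      then show "restrict (restrict (HH x) (\<xi>s n)) (dc s) \<in> restr_set (Xs n) (dc s)"
        using good'[OF s] by simp
    qed
  qed
qed

lemma fwd: "(\<And>t. t \<in> dc s \<Longrightarrow> x0 t = x1 t) \<Longrightarrow> HH x0 s = HH x1 s"
proof (induction "length s" arbitrary: s rule: less_induct)
  case less
  show ?case
  proof (cases "s \<in> V")
    case False then show ?thesis using HH_eq[of x0 s] HH_eq[of x1 s] by simp
  next
    case True
    have sne: "s \<noteq> []" using True nilV by blast
    have r: "restrict (HH x0) (anc s) = restrict (HH x1) (anc s)"
    proof (rule restrict_eqI)
      fix t assume t: "t \<in> anc s"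
      have "dc t \<subseteq> dc s" using anc_dc_in[OF t] anc_sub_dc by blast
      then have "\<And>u. u \<in> dc t \<Longrightarrow> x0 u = x1 u" using less.prems by blast
      then show "HH x0 t = HH x1 t" by (rule less.hyps[OF anc_length[OF t]])
    qed
    have "x0 s = x1 s" using less.prems s_in_dc[OF sne] by blast
    then show ?thesis using HH_eq[of x0 s] HH_eq[of x1 s] True r
      by (simp add: Phi_def ipsL.fib_cong[OF L r])
  qed
qed

lemma bwd: assumes sV: "s \<in> V" and h: "\<And>t. t \<in> dc s \<Longrightarrow> HH x0 t = HH x1 t"
  shows "x0 s = x1 s"
proof -
  define n where "n = N s"
  interpret I: ipsL "\<xi>s n" "Xs n" "Hs n" by (rule L)
  have sn: "s \<in> \<xi>s n" using N[OF sV] n_def by simp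
  have sne: "s \<noteq> []" using sV nilV by blast
  have r: "restrict (HH x0) (anc s) = restrict (HH x1) (anc s)"
    by (rule restrict_eqI) (use h anc_sub_dc in blast)
  have "HH x0 s = HH x1 s" using h s_in_dc[OF sne] by blast
  then have "I.fib s (HH x0) (x0 s) = I.fib s (HH x0) (x1 s)"
    using HH_eq[of x0 s] HH_eq[of x1 s] sV I.fib_cong[OF r] by (simp add: Phi_def n_def)
  then show ?thesis using I.F2[OF sn] good[OF sV] n_def by blast
qed

lemma surjS: assumes SV: "S \<subseteq> V" and Sdc: "\<And>s. s \<in> S \<Longrightarrow> dc s \<subseteq> S"
  and z: "\<And>s. s \<in> S \<Longrightarrow> restrict z (dc s) \<in> restr_set (Xs (N s)) (dc s)"
  shows "\<exists>x\<in>topspace (cube V). \<forall>s\<in>S. HH x s = z s"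
proof -
  have "\<forall>s\<in>S. \<exists>w. w \<in> topspace (cube (\<xi>s (N s))) \<and> restrict z (dc s) = restrict (Hs (N s) w) (dc s)"
  proof
    fix s assume s: "s \<in> S"
    obtain w where "w \<in> topspace (cube (\<xi>s (N s)))" "restrict z (dc s) = restrict (Hs (N s) w) (dc s)"
      using z[OF s] by (rule ipsL.restr_setE[OF L])
    then show "\<exists>w. w \<in> topspace (cube (\<xi>s (N s))) \<and> restrict z (dc s) = restrict (Hs (N s) w) (dc s)" by blast
  qed
  then obtain ws where ws: "\<And>s. s\<in>S \<Longrightarrow> ws s \<in> topspace (cube (\<xi>s (N s))) \<and> restrict z (dc s) = restrict (Hs (N s) (ws s)) (dc s)"
    by metis
  define x where "x = (\<lambda>s. if s \<in> S then ws s s else if s \<in> V then (\<lambda>_. False) else undefined)"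
  have xtop: "x \<in> topspace (cube V)" using SV by (auto simp: x_def topspace_cube PiE_def extensional_def)
  have "HH x s = z s" if "s \<in> S" for s
    using that
  proof (induction "length s" arbitrary: s rule: less_induct)
    case less
    have sV: "s \<in> V" using less.prems SV by blast
    have sne: "s \<noteq> []" using sV nilV by blast
    have r: "restrict (HH x) (anc s) = restrict z (anc s)"
    proof (rule restrict_eqI)
      fix t assume t: "t \<in> anc s"
      then have "t \<in> S" using Sdc[OF less.prems] anc_sub_dc by blast
      then show "HH x t = z t" using less.hyps[OF anc_length[OF t]] by blast
    qed
    have "HH x s = Phi s z (ws s s)"
      using HH_eq[of x s] sV less.prems ipsL.fib_cong[OF L r] by (simp add: Phi_def x_def)
    also have "\<dots> = z s"
      unfolding Phi_def using ipsL.F3[OF L N[OF sV]] ws[OF less.prems] by blast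
    finally show ?case .
  qed
  then show ?thesis using xtop by blast
qed

lemma Xset_good: "z \<in> Xset \<Longrightarrow> s \<in> V \<Longrightarrow> restrict z (dc s) \<in> restr_set (Xs (N s)) (dc s)"
proof -
  assume z: "z \<in> Xset" and sV: "s \<in> V"
  then have "restrict z (\<xi>s (N s)) \<in> Xs (N s)" using Xset_iff by blast
  then have "restrict (restrict z (\<xi>s (N s))) (dc s) \<in> restr_set (Xs (N s)) (dc s)"
    unfolding restr_set_def by blast
  then show ?thesis using Xi_dc[OF xi N[OF sV]] by (simp add: Int_absorb1 Int_absorb2)
qed


lemma HH_cont_s: "s \<in> V \<Longrightarrow> continuous_map (cube V) Dtop (\<lambda>x. HH x s)"
proof (induction "length s" arbitrary: s rule: less_induct)
  case less
  define n where "n = N s"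
  interpret I: ipsL "\<xi>s n" "Xs n" "Hs n" by (rule L)
  have sV: "s \<in> V" by (rule less.prems)
  have sn: "s \<in> \<xi>s n" using N[OF sV] n_def by simp
  have pc: "continuous_map (cube V) (cube (anc s)) (\<lambda>x. restrict (HH x) (anc s))"
    unfolding cube_def continuous_map_componentwise
  proof (intro conjI ballI)
    show "(\<lambda>x. restrict (HH x) (anc s)) ` topspace (product_topology (\<lambda>_. Dtop) V) \<subseteq> extensional (anc s)"
      by auto
    fix k assume k: "k \<in> anc s"
    have kV: "k \<in> V" using k ancV[OF sV] by blast
    have "continuous_map (cube V) Dtop (\<lambda>x. HH x k)" by (rule less.hyps[OF anc_length[OF k] kV])
    then show "continuous_map (product_topology (\<lambda>_. Dtop) V) Dtop (\<lambda>x. restrict (HH x) (anc s) k)"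
      using k by (simp add: cube_def)
  qed
  have p: "continuous_map (cube V) (subtopology (cube (anc s)) (restr_set (Xs n) (anc s))) (\<lambda>x. restrict (HH x) (anc s))"
    unfolding continuous_map_in_subtopology using pc good[OF sV] n_def by auto
  have "continuous_map (cube V) Dtop (\<lambda>x. Hs n (I.ext2 s (I.ginv s (restrict (HH x) (anc s))) (x s)) s)"
    by (rule I.F4[OF sn p cube_proj[OF sV]])
  then show ?case
  proof (rule continuous_map_eq)
    fix x
    show "Hs n (I.ext2 s (I.ginv s (restrict (HH x) (anc s))) (x s)) s = HH x s"
      using HH_eq[of x s] sV unfolding Phi_def n_def[symmetric] I.fib_def by simp
  qed
qed

lemma Xset_sub: "Xset \<subseteq> topspace (cube V)"
  using Xset_iff by blast

lemma HH_cont: "continuous_map (cube V) (subtopology (cube V) Xset) HH"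
  unfolding continuous_map_in_subtopology
proof
  show "continuous_map (cube V) (cube V) HH"
    unfolding cube_def continuous_map_componentwise
  proof (intro conjI ballI)
    show "HH ` topspace (product_topology (\<lambda>_. Dtop) V) \<subseteq> extensional V"
      using HH_top by (auto simp: topspace_cube PiE_def)
    fix k assume "k \<in> V"
    then show "continuous_map (product_topology (\<lambda>_. Dtop) V) Dtop (\<lambda>x. HH x k)"
      using HH_cont_s by (simp add: cube_def)
  qed
  show "HH \<in> topspace (cube V) \<rightarrow> Xset" using HH_in by blast
qed

lemma HH_inj: "inj_on HH (topspace (cube V))"
proof
  fix x0 x1 assume x: "x0 \<in> topspace (cube V)" "x1 \<in> topspace (cube V)" "HH x0 = HH x1"
  show "x0 = x1"
  proof (rule cube_ext_eq[OF x(1,2)])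
    fix s assume "s \<in> V"
    then show "x0 s = x1 s" using bwd x(3) by metis
  qed
qed

lemma HH_img: "HH ` topspace (cube V) = Xset"
proof
  show "HH ` topspace (cube V) \<subseteq> Xset" using HH_in by blast
  show "Xset \<subseteq> HH ` topspace (cube V)"
  proof
    fix z assume z: "z \<in> Xset"
    obtain x where x: "x \<in> topspace (cube V)" "\<forall>s\<in>V. HH x s = z s"
      using surjS[of V z] dcV Xset_good[OF z] by blast
    have "HH x = z" by (rule cube_ext_eq[OF HH_top Xset_sub[THEN subsetD, OF z]]) (use x in blast)
    then show "z \<in> HH ` topspace (cube V)" using x(1) by blast
  qed
qed

lemma Xset_IPS: "Xset \<in> IPS V"
  unfolding IPS_iff
proof (intro conjI exI)
  show "Xset \<subseteq> topspace (cube V)" by (rule Xset_sub)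
  show "ipsH V Xset HH"
    unfolding ipsH_def
  proof (intro conjI ballI impI)
    show "homeomorphic_map (cube V) (subtopology (cube V) Xset) HH"
    proof (rule continuous_imp_homeomorphic_map[OF HH_cont compact_cube])
      show "Hausdorff_space (subtopology (cube V) Xset)"
        using Hausdorff_cube Hausdorff_space_subtopology by blast
      show "HH ` topspace (cube V) = topspace (subtopology (cube V) Xset)"
        using HH_img Xset_sub by auto
      show "inj_on HH (topspace (cube V))" by (rule HH_inj)
    qed
    fix x0 x1 \<xi> assume x: "x0 \<in> topspace (cube V)" "x1 \<in> topspace (cube V)" and xi': "\<xi> \<in> Xi" "\<xi> \<subseteq> V"
    show "(restrict x0 \<xi> = restrict x1 \<xi>) = (restrict (HH x0) \<xi> = restrict (HH x1) \<xi>)"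
    proof
      assume h: "restrict x0 \<xi> = restrict x1 \<xi>"
      show "restrict (HH x0) \<xi> = restrict (HH x1) \<xi>"
      proof (rule restrict_eqI)
        fix s assume s: "s \<in> \<xi>"
        show "HH x0 s = HH x1 s"
        proof (rule fwd)
          fix t assume "t \<in> dc s"
          then have "t \<in> \<xi>" using Xi_dc[OF xi'(1) s] by blast
          then show "x0 t = x1 t" using h by (rule restrict_eqD[rotated])
        qed
      qed
    next
      assume h: "restrict (HH x0) \<xi> = restrict (HH x1) \<xi>"
      show "restrict x0 \<xi> = restrict x1 \<xi>"
      proof (rule restrict_eqI)
        fix s assume s: "s \<in> \<xi>"
        show "x0 s = x1 s"
        proof (rule bwd)
          show "s \<in> V" using s xi'(2) by blast
          fix t assume "t \<in> dc s"
          then have "t \<in> \<xi>" using Xi_dc[OF xi'(1) s] by blast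
          then show "HH x0 t = HH x1 t" using h by (rule restrict_eqD[rotated])
        qed
      qed
    qed
  qed
qed

lemma Xset_restr: "restr_set Xset (\<xi>s n) = Xs n"
proof
  show "restr_set Xset (\<xi>s n) \<subseteq> Xs n" unfolding restr_set_def using Xset_iff by auto
  show "Xs n \<subseteq> restr_set Xset (\<xi>s n)"
  proof
    fix z assume z: "z \<in> Xs n"
    have SV: "\<xi>s n \<subseteq> V" unfolding V_def by blast
    have zc: "restrict z (dc s) \<in> restr_set (Xs (N s)) (dc s)" if s: "s \<in> \<xi>s n" for s
    proof -
      have "restrict z (dc s) \<in> restr_set (Xs n) (dc s)" unfolding restr_set_def using z by blast
      moreover have "restr_set (Xs n) (dc s) = restr_set (Xs (N s)) (dc s)"
        using SV s coh'[OF Xi_dc[OF xi s] Xi_dc[OF xi N]] by blast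
      ultimately show ?thesis by simp
    qed
    obtain x where x: "x \<in> topspace (cube V)" "\<forall>s\<in>\<xi>s n. HH x s = z s"
      using surjS[OF SV Xi_dc[OF xi] zc] by blast
    have ztop: "z \<in> topspace (cube (\<xi>s n))" using z sub by blast
    have "restrict (HH x) (\<xi>s n) = restrict z (\<xi>s n)" by (rule restrict_eqI) (use x in blast)
    also have "\<dots> = z" using ztop by (simp add: topspace_cube)
    finally show "z \<in> restr_set Xset (\<xi>s n)" unfolding restr_set_def using HH_in by (metis image_eqI)
  qed
qed

end



lemma restr_set_empty: "X \<noteq> {} \<Longrightarrow> restr_set X {} = {\<lambda>_. undefined}"
  unfolding restr_set_def by (auto simp: restrict_def)

theorem lemma2p26:
  fixes \<xi>s :: "nat \<Rightarrow> 'a list set"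
    and Xs :: "nat \<Rightarrow> ('a list \<Rightarrow> nat \<Rightarrow> bool) set"
  assumes xi: "\<And>n. \<xi>s n \<in> Xi"
    and ips: "\<And>n. Xs n \<in> IPS (\<xi>s n)"
  shows "((\<forall>k n. restr_set (Xs n) (\<xi>s k \<inter> \<xi>s n) = restr_set (Xs k) (\<xi>s k \<inter> \<xi>s n)) \<longrightarrow>
           (\<Inter>n. lift_set (Xs n) (\<xi>s n) (\<Union>m. \<xi>s m)) \<in> IPS (\<Union>m. \<xi>s m) \<and>
           (\<forall>n. restr_set (\<Inter>k. lift_set (Xs k) (\<xi>s k) (\<Union>m. \<xi>s m)) (\<xi>s n) = Xs n)) \<and>
         ((\<forall>k n. k \<noteq> n \<longrightarrow> \<xi>s k \<inter> \<xi>s n = {}) \<longrightarrow>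
           (\<forall>k n. restr_set (Xs n) (\<xi>s k \<inter> \<xi>s n) = restr_set (Xs k) (\<xi>s k \<inter> \<xi>s n)) \<and>
           (\<Inter>n. lift_set (Xs n) (\<xi>s n) (\<Union>m. \<xi>s m)) \<in> IPS (\<Union>m. \<xi>s m) \<and>
           (\<forall>n. restr_set (\<Inter>k. lift_set (Xs k) (\<xi>s k) (\<Union>m. \<xi>s m)) (\<xi>s n) = Xs n))"
proof -
  have "\<forall>n. \<exists>H. ipsH (\<xi>s n) (Xs n) H" using ips IPS_iff by blast
  then obtain Hs where Hs: "\<And>n. ipsH (\<xi>s n) (Xs n) (Hs n)" by metis
  have sub: "\<And>n. Xs n \<subseteq> topspace (cube (\<xi>s n))" using ips IPS_iff by blast
  have part1: "(\<Inter>n. lift_set (Xs n) (\<xi>s n) (\<Union>m. \<xi>s m)) \<in> IPS (\<Union>m. \<xi>s m) \<and>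
           (\<forall>n. restr_set (\<Inter>k. lift_set (Xs k) (\<xi>s k) (\<Union>m. \<xi>s m)) (\<xi>s n) = Xs n)"
    if coh: "\<forall>k n. restr_set (Xs n) (\<xi>s k \<inter> \<xi>s n) = restr_set (Xs k) (\<xi>s k \<inter> \<xi>s n)"
  proof -
    interpret M: mainL \<xi>s Xs Hs
      using xi sub Hs coh by (simp add: mainL_def)
    show ?thesis
      using M.Xset_IPS M.Xset_restr unfolding M.Xset_def M.V_def by blast
  qed
  have ne: "Xs n \<noteq> {}" for n using ipsL.Xne[of "\<xi>s n" "Xs n" "Hs n"] xi sub Hs by (simp add: ipsL_def)
  have part2: "\<forall>k n. restr_set (Xs n) (\<xi>s k \<inter> \<xi>s n) = restr_set (Xs k) (\<xi>s k \<inter> \<xi>s n)"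
    if disj: "\<forall>k n. k \<noteq> n \<longrightarrow> \<xi>s k \<inter> \<xi>s n = {}"
  proof (intro allI)
    fix k n
    show "restr_set (Xs n) (\<xi>s k \<inter> \<xi>s n) = restr_set (Xs k) (\<xi>s k \<inter> \<xi>s n)"
    proof (cases "k = n")
      case True then show ?thesis by simp
    next
      case False
      then have "\<xi>s k \<inter> \<xi>s n = {}" using disj by blast
      then show ?thesis using restr_set_empty[OF ne] by simp
    qed
  qed
  show ?thesis using part1 part2 by blast
qed

end
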